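(* In $\mathrm{Leib}$, for every $n\ge1$, $0\le i\le n$ and $0\le j\le n-1$: \[ \rho_i^n\chi_j^n=\begin{cases} \chi_{j+1}^{n+1}\rho_i^n & \text{if } j>i,\\ \chi_{i+1}^{n+1}\chi_i^{n+1}\rho_{i+1}^n-\chi_{i+1}^{n+1}\chi_i^{n+1}\chi_{i+1}^{n+1}\rho_i^n+\chi_i^{n+1}\chi_{i+1}^{n+1}\rho_{i-1}^n & \text{if } j=i,\\ \chi_j^{n+1}\rho_i^n & \text{if } j<i. \end{cases}\]
   Context: Let $\Bbbk$ be a field and $\mathbb{K}=\bigoplus_{n\in\mathbb N}\Bbbk1_n$ with $1_n1_m=\delta_{nm}1_n$. A $\mathbb K$-algebra is the categorical algebra of a small $\Bbbk$-linear category with object set $\mathbb N$ (a doubly graded algebra $\bigoplus_{n,m}V_{n,m}$ with local units $1_n$). Generators: $\partial^n_j$ ($n\ge0$, $0\le j\le n$) of bidegree $(n+1,n)$ (a morphism $n\to n+1$) and $\chi^n_i$ ($n\ge1$, $0\le i\le n-1$) of bidegree $(n,n)$; products with mismatched degrees are $0$. $\mathrm{Mag}$ is the free $\mathbb K$-algebra on the $\partial^n_j$ modulo $\partial^{n+1}_i\partial^n_j=\partial^{n+1}_{j+1}\partial^n_i$ for $0\le i<j\le n$. $\mathrm{Sym}$ is the free $\mathbb K$-algebra on the $\chi^n_i$ modulo $\chi^n_i\chi^n_j=\chi^n_j\chi^n_i$ ($|i-j|\ge2$), $\chi^n_i\chi^n_{i+1}\chi^n_i=\chi^n_{i+1}\chi^n_i\chi^n_{i+1}$,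 $\chi^n_i\chi^n_i=1_n$; thus $1_n\mathrm{Sym}1_n\cong\Bbbk[S_{n+1}]$. $\mathrm{Sym}\otimes_\zeta\mathrm{Mag}$ is the $\mathbb K$-algebra generated by $\mathrm{Sym}$ and $\mathrm{Mag}$ with underlying bimodule $\mathrm{Sym}\otimes_{\mathbb K}\mathrm{Mag}$ and additional commutation relations $\partial_i^n\chi_j^n=\chi^{n+1}_{j+1}\partial^n_i$ if $i<j$; $=\chi^{n+1}_{i+1}\chi^{n+1}_i\partial^n_{i+1}$ if $i=j$; $=\chi^{n+1}_{i-1}\chi^{n+1}_i\partial^n_{i-1}$ if $i=j+1$; $=\chi^{n+1}_j\partial^n_i$ if $i>j+1$. $\mathrm{Leib}$ is the quotient of $\mathrm{Sym}\otimes_\zeta\mathrm{Mag}$ by the ideal generated by $\partial^{n+1}_{j+1}\partial^n_j-(1_{n+2}-\chi^{n+2}_{j+1})\partial^{n+1}_j\partial^n_j$, $0\le j\le n$, $n\ge0$. In $\mathrm{Leib}$, $\rho^n_{-1}:=0$ and $\rho^n_j:=\partial^n_j+\sum_{a=1}^j\chi^{n+1}_j\cdots\chi^{n+1}_a\partial^n_{a-1}$ for $0\le j\le n$ (equivalently $\rho^n_{j+1}=\partial^n_{j+1}+\chi^{n+1}_{j+1}\rho^n_j$). *)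

theory Defs
  imports Main "HOL-Library.Poly_Mapping"
begin

text \<open>Generators: D n j is the generator partial^n_j (a morphism n -> n+1, valid for j \<le> n);
  X n i is the generator chi^n_i (a morphism n -> n, valid for n \<ge> 1 and i \<le> n - 1).\<close>
datatype gen = D nat nat | X nat nat

fun gen_valid :: "gen \<Rightarrow> bool" where
  "gen_valid (D n j) = (j \<le> n)"
| "gen_valid (X n i) = (1 \<le> n \<and> i + 1 \<le> n)"

fun gen_src :: "gen \<Rightarrow> nat" where
  "gen_src (D n j) = n"
| "gen_src (X n i) = n"

fun gen_tgt :: "gen \<Rightarrow> nat" where
  "gen_tgt (D n j) = Suc n"
| "gen_tgt (X n i) = n"

text \<open>A path is a word in the generators together with its source object.  The word
  g_1 g_2 ... g_k stands for the product g_1 g_2 ... g_k (so g_k is applied first);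
  the empty word at object m stands for the local unit 1_m.\<close>
type_synonym path = "gen list \<times> nat"

fun wtgt :: "gen list \<Rightarrow> nat \<Rightarrow> nat" where
  "wtgt [] m = m"
| "wtgt (g # w) m = gen_tgt g"

fun wvalid :: "gen list \<Rightarrow> nat \<Rightarrow> bool" where
  "wvalid [] m = True"
| "wvalid (g # w) m = (gen_valid g \<and> gen_src g = wtgt w m \<and> wvalid w m)"

definition pvalid :: "path \<Rightarrow> bool" where
  "pvalid p = wvalid (fst p) (snd p)"

definition ptgt :: "path \<Rightarrow> nat" where
  "ptgt p = wtgt (fst p) (snd p)"

text \<open>Composition (product) of paths; products with mismatched degrees are zero (None).\<close>
definition pcomp :: "path \<Rightarrow> path \<Rightarrow> path option" where
  "pcomp p q = (if pvalid p \<and> pvalid q \<and> snd p = ptgt q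
                then Some (fst p @ fst q, snd q) else None)"

text \<open>The free K-algebra (free algebra of the free linear category on the quiver of generators):
  finitely supported k-linear combinations of paths, with bilinearly extended product.\<close>
type_synonym 'k falg = "path \<Rightarrow>\<^sub>0 'k"

definition fmul :: "'k::field falg \<Rightarrow> 'k falg \<Rightarrow> 'k falg" (infixl "\<cdot>" 70) where
  "fmul x y = (\<Sum>p\<in>Poly_Mapping.keys x. \<Sum>q\<in>Poly_Mapping.keys y.
      (case pcomp p q of None \<Rightarrow> 0
       | Some r \<Rightarrow> Poly_Mapping.single r (Poly_Mapping.lookup x p * Poly_Mapping.lookup y q)))"

definition unit_el :: "nat \<Rightarrow> 'k::field falg" ("\<one>") where
  "unit_el n = Poly_Mapping.single ([], n) 1"

definition gen_el :: "gen \<Rightarrow> 'k::field falg" where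
  "gen_el g = Poly_Mapping.single ([g], gen_src g) 1"

abbreviation dd :: "nat \<Rightarrow> nat \<Rightarrow> 'k::field falg" ("\<partial>") where
  "dd n j \<equiv> gen_el (D n j)"

abbreviation chi :: "nat \<Rightarrow> nat \<Rightarrow> 'k::field falg" ("\<chi>") where
  "chi n i \<equiv> gen_el (X n i)"

text \<open>Defining relations of Leib (each listed as an element r meaning r = 0).\<close>
definition leib_rels :: "'k::field falg set" where
  "leib_rels =
     \<comment> \<open>Mag\<close>
     {\<partial> (Suc n) i \<cdot> \<partial> n j - \<partial> (Suc n) (Suc j) \<cdot> \<partial> n i | n i j. i < j \<and> j \<le> n}
   \<union> \<comment> \<open>Sym\<close>
     {\<chi> n i \<cdot> \<chi> n j - \<chi> n j \<cdot> \<chi> n i | n i j. 1 \<le> n \<and> i + 1 \<le> n \<and> j + 1 \<le> n \<and> i + 2 \<le> j}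
   \<union> {\<chi> n i \<cdot> \<chi> n (Suc i) \<cdot> \<chi> n i - \<chi> n (Suc i) \<cdot> \<chi> n i \<cdot> \<chi> n (Suc i) | n i. i + 2 \<le> n}
   \<union> {\<chi> n i \<cdot> \<chi> n i - \<one> n | n i. 1 \<le> n \<and> i + 1 \<le> n}
   \<union> \<comment> \<open>commutation relations of Sym \<otimes>_zeta Mag\<close>
     {\<partial> n i \<cdot> \<chi> n j - \<chi> (Suc n) (Suc j) \<cdot> \<partial> n i | n i j. 1 \<le> n \<and> i \<le> n \<and> j + 1 \<le> n \<and> i < j}
   \<union> {\<partial> n i \<cdot> \<chi> n i - \<chi> (Suc n) (Suc i) \<cdot> \<chi> (Suc n) i \<cdot> \<partial> n (Suc i) | n i. 1 \<le> n \<and> i + 1 \<le> n}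
   \<union> {\<partial> n (Suc j) \<cdot> \<chi> n j - \<chi> (Suc n) j \<cdot> \<chi> (Suc n) (Suc j) \<cdot> \<partial> n j | n j. 1 \<le> n \<and> j + 1 \<le> n}
   \<union> {\<partial> n i \<cdot> \<chi> n j - \<chi> (Suc n) j \<cdot> \<partial> n i | n i j. 1 \<le> n \<and> i \<le> n \<and> j + 1 \<le> n \<and> j + 1 < i}
   \<union> \<comment> \<open>Leib relation\<close>
     {\<partial> (Suc n) (Suc j) \<cdot> \<partial> n j - (\<one> (n+2) - \<chi> (n+2) (Suc j)) \<cdot> \<partial> (Suc n) j \<cdot> \<partial> n j | n j. j \<le> n}"

inductive_set ideal_of :: "'k::field falg set \<Rightarrow> 'k falg set" for R where
  zero: "0 \<in> ideal_of R"
| add: "x \<in> ideal_of R \<Longrightarrow> y \<in> ideal_of R \<Longrightarrow> x + y \<in> ideal_of R"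
| gen: "r \<in> R \<Longrightarrow> a \<cdot> r \<cdot> b \<in> ideal_of R"

definition leib_eq :: "'k::field falg \<Rightarrow> 'k falg \<Rightarrow> bool" (infix "\<equiv>\<^sub>L" 50) where
  "x \<equiv>\<^sub>L y \<longleftrightarrow> x - y \<in> ideal_of leib_rels"

fun rho :: "nat \<Rightarrow> nat \<Rightarrow> 'k::field falg" where
  "rho n 0 = \<partial> n 0"
| "rho n (Suc j) = \<partial> n (Suc j) + \<chi> (Suc n) (Suc j) \<cdot> rho n j"

definition rho_pred :: "nat \<Rightarrow> nat \<Rightarrow> 'k::field falg" where
  "rho_pred n i = (if i = 0 then 0 else rho n (i - 1))"

end

theory Submission
  imports Defs
begin


definition T :: "path \<Rightarrow> path \<Rightarrow> 'k::field \<Rightarrow> 'k falg" where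
  "T p q c = (case pcomp p q of None \<Rightarrow> 0 | Some r \<Rightarrow> Poly_Mapping.single r c)"

lemma T_0[simp]: "T p q 0 = 0" by (simp add: T_def split: option.splits)
lemma T_add: "T p q (a + b) = T p q a + T p q b"
  by (simp add: T_def single_add split: option.splits)

lemma fmul_alt:
  assumes "finite S" "Poly_Mapping.keys x \<subseteq> S" "finite U" "Poly_Mapping.keys y \<subseteq> U"
  shows "fmul x y = (\<Sum>p\<in>S. \<Sum>q\<in>U. T p q (Poly_Mapping.lookup x p * Poly_Mapping.lookup y q))"
proof -
  have "fmul x y = (\<Sum>p\<in>Poly_Mapping.keys x. \<Sum>q\<in>Poly_Mapping.keys y. T p q (Poly_Mapping.lookup x p * Poly_Mapping.lookup y q))"
    unfolding fmul_def T_def by simp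
  also have "\<dots> = (\<Sum>p\<in>Poly_Mapping.keys x. \<Sum>q\<in>U. T p q (Poly_Mapping.lookup x p * Poly_Mapping.lookup y q))"
    by (rule sum.cong[OF refl], rule sum.mono_neutral_left) (use assms in \<open>auto simp: in_keys_iff\<close>)
  also have "\<dots> = (\<Sum>p\<in>S. \<Sum>q\<in>U. T p q (Poly_Mapping.lookup x p * Poly_Mapping.lookup y q))"
    by (rule sum.mono_neutral_left) (use assms in \<open>auto simp: in_keys_iff\<close>)
  finally show ?thesis .
qed

lemma fmul_add_left: "fmul (x + y) z = fmul x z + fmul y z"
proof -
  let ?S = "Poly_Mapping.keys x \<union> Poly_Mapping.keys y"
  have k: "Poly_Mapping.keys (x+y) \<subseteq> ?S" by (rule keys_add)
  show ?thesis
    apply (subst fmul_alt[of ?S _ "Poly_Mapping.keys z"], simp, rule k, simp, simp)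
    apply (subst fmul_alt[of ?S _ "Poly_Mapping.keys z"], simp, simp, simp, simp)
    apply (subst fmul_alt[of ?S _ "Poly_Mapping.keys z"], simp, simp, simp, simp)
    by (simp add: lookup_add distrib_right T_add sum.distrib)
qed

lemma fmul_add_right: "fmul z (x + y) = fmul z x + fmul z y"
proof -
  let ?S = "Poly_Mapping.keys x \<union> Poly_Mapping.keys y"
  have k: "Poly_Mapping.keys (x+y) \<subseteq> ?S" by (rule keys_add)
  show ?thesis
    apply (subst fmul_alt[of "Poly_Mapping.keys z" _ ?S], simp, simp, simp, rule k)
    apply (subst fmul_alt[of "Poly_Mapping.keys z" _ ?S], simp, simp, simp, simp)
    apply (subst fmul_alt[of "Poly_Mapping.keys z" _ ?S], simp, simp, simp, simp)
    by (simp add: lookup_add distrib_left T_add sum.distrib)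
qed

lemma fmul_0_left[simp]: "fmul 0 x = 0" unfolding fmul_def by simp
lemma fmul_0_right[simp]: "fmul x 0 = 0" unfolding fmul_def by simp

lemma fmul_uminus_left: "fmul (- x) y = - fmul x y"
  using fmul_add_left[of x "-x" y] by (simp add: eq_neg_iff_add_eq_0 add.commute)
lemma fmul_uminus_right: "fmul y (- x) = - fmul y x"
  using fmul_add_right[of y x "-x"] by (simp add: eq_neg_iff_add_eq_0 add.commute)
lemma fmul_diff_left: "fmul (x - y) z = fmul x z - fmul y z"
  using fmul_add_left[of x "-y" z] by (simp add: fmul_uminus_left)
lemma fmul_diff_right: "fmul z (x - y) = fmul z x - fmul z y"
  using fmul_add_right[of z x "-y"] by (simp add: fmul_uminus_right)

lemma fmul_sum_left: "fmul (sum f A) y = (\<Sum>a\<in>A. fmul (f a) y)"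
  by (induction A rule: infinite_finite_induct) (auto simp: fmul_add_left)
lemma fmul_sum_right: "fmul y (sum f A) = (\<Sum>a\<in>A. fmul y (f a))"
  by (induction A rule: infinite_finite_induct) (auto simp: fmul_add_right)

lemma fmul_single: "fmul (Poly_Mapping.single p a) (Poly_Mapping.single q b) = T p q (a * b)"
  by (subst fmul_alt[of "{p}" _ "{q}"]) auto

lemma wtgt_append: "wtgt (w @ v) m = wtgt w (wtgt v m)"
  by (induction w) auto
lemma wvalid_append: "wvalid (w @ v) m = (wvalid w (wtgt v m) \<and> wvalid v m)"
  by (induction w) (auto simp: wtgt_append)

lemma pcomp_simp: "pcomp (w1,m1) (w2,m2) = (if wvalid w1 m1 \<and> wvalid w2 m2 \<and> m1 = wtgt w2 m2 then Some (w1@w2, m2) else None)"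
  by (auto simp add: pcomp_def pvalid_def ptgt_def)

lemma pcomp_assoc: "Option.bind (pcomp p q) (\<lambda>r. pcomp r s) = Option.bind (pcomp q s) (pcomp p)"
proof -
  obtain w1 m1 where p: "p = (w1,m1)" by (cases p)
  obtain w2 m2 where q: "q = (w2,m2)" by (cases q)
  obtain w3 m3 where s: "s = (w3,m3)" by (cases s)
  have "Option.bind (pcomp (w1,m1) (w2,m2)) (\<lambda>r. pcomp r (w3,m3)) = Option.bind (pcomp (w2,m2) (w3,m3)) (pcomp (w1,m1))"
  proof (cases "wvalid w1 m1 \<and> wvalid w2 m2 \<and> m1 = wtgt w2 m2 \<and> wvalid w3 m3 \<and> m2 = wtgt w3 m3")
    case True
    then show ?thesis by (simp add: pcomp_simp wtgt_append wvalid_append)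
  next
    case False
    have L: "Option.bind (pcomp (w1,m1) (w2,m2)) (\<lambda>r. pcomp r (w3,m3)) = None"
    proof (cases "wvalid w1 m1 \<and> wvalid w2 m2 \<and> m1 = wtgt w2 m2")
      case True
      then have nf: "\<not> (wvalid (w1@w2) m2 \<and> wvalid w3 m3 \<and> m2 = wtgt w3 m3)" using False by blast
      have e1: "pcomp (w1,m1) (w2,m2) = Some (w1@w2,m2)" by (subst pcomp_simp, rule if_P[OF True])
      have e2: "pcomp (w1@w2,m2) (w3,m3) = None" by (subst pcomp_simp, rule if_not_P[OF nf])
      show ?thesis by (simp only: e1 e2 bind.simps)
    next
      case False
      then show ?thesis by (subst pcomp_simp, subst if_not_P, assumption, simp)
    qed
    have R: "Option.bind (pcomp (w2,m2) (w3,m3)) (pcomp (w1,m1)) = None"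
    proof (cases "wvalid w2 m2 \<and> wvalid w3 m3 \<and> m2 = wtgt w3 m3")
      case True
      then have "\<not> (wvalid w1 m1 \<and> wvalid (w2@w3) m3 \<and> m1 = wtgt (w2@w3) m3)" using False
        by (simp only: wvalid_append wtgt_append) blast
      then have nf: "\<not> (wvalid w1 m1 \<and> wvalid (w2@w3) m3 \<and> m1 = wtgt (w2@w3) m3)" .
      have e1: "pcomp (w2,m2) (w3,m3) = Some (w2@w3,m3)" by (subst pcomp_simp, rule if_P[OF True])
      have e2: "pcomp (w1,m1) (w2@w3,m3) = None" by (subst pcomp_simp, rule if_not_P[OF nf])
      show ?thesis by (simp only: e1 e2 bind.simps)
    next
      case False
      then show ?thesis by (subst pcomp_simp, subst if_not_P, assumption, simp)
    qed
    show ?thesis using L R by simp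
  qed
  then show ?thesis using p q s by simp
qed
lemma single_assoc:
  "fmul (fmul (Poly_Mapping.single p a) (Poly_Mapping.single q b)) (Poly_Mapping.single s c)
   = fmul (Poly_Mapping.single p a) (fmul (Poly_Mapping.single q b) (Poly_Mapping.single s c))"
proof (cases "pcomp p q")
  case None
  then have n: "Option.bind (pcomp q s) (pcomp p) = None" using pcomp_assoc[of p q s] by simp
  show ?thesis
  proof (cases "pcomp q s")
    case None2: None
    show ?thesis using None None2 by (simp add: fmul_single T_def)
  next
    case (Some r)
    then have "pcomp p r = None" using n by simp
    then show ?thesis using None Some by (simp add: fmul_single T_def)
  qed
next
  case (Some r)
  then have n: "pcomp r s = Option.bind (pcomp q s) (pcomp p)" using pcomp_assoc[of p q s] by simp
  show ?thesis
  proof (cases "pcomp q s")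
    case None2: None
    then have "pcomp r s = None" using n by simp
    then show ?thesis using Some None2 by (simp add: fmul_single T_def)
  next
    case Some2: (Some r')
    then have "pcomp r s = pcomp p r'" using n by simp
    then show ?thesis using Some Some2 by (cases "pcomp p r'") (simp_all add: fmul_single T_def mult.assoc)
  qed
qed

lemma poly_decomp: "x = (\<Sum>p\<in>Poly_Mapping.keys x. Poly_Mapping.single p (Poly_Mapping.lookup x p))"
  by (rule poly_mapping_eqI) (auto simp: lookup_sum lookup_single when_def in_keys_iff
      intro: sum.neutral sum.delta'[THEN trans])

lemma fmul_assoc: "fmul (fmul x y) z = fmul x (fmul y z)"
proof -
  have "fmul (fmul x y) z = fmul (fmul (\<Sum>p\<in>Poly_Mapping.keys x. Poly_Mapping.single p (Poly_Mapping.lookup x p))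
      (\<Sum>p\<in>Poly_Mapping.keys y. Poly_Mapping.single p (Poly_Mapping.lookup y p)))
      (\<Sum>p\<in>Poly_Mapping.keys z. Poly_Mapping.single p (Poly_Mapping.lookup z p))"
    by (simp only: poly_decomp[symmetric])
  also have "\<dots> = fmul (\<Sum>p\<in>Poly_Mapping.keys x. Poly_Mapping.single p (Poly_Mapping.lookup x p))
      (fmul (\<Sum>p\<in>Poly_Mapping.keys y. Poly_Mapping.single p (Poly_Mapping.lookup y p))
      (\<Sum>p\<in>Poly_Mapping.keys z. Poly_Mapping.single p (Poly_Mapping.lookup z p)))"
    by (simp only: fmul_sum_left fmul_sum_right single_assoc)
  also have "\<dots> = fmul x (fmul y z)" by (simp only: poly_decomp[symmetric])
  finally show ?thesis .
qed




lemma unit_gen_left: "gen_valid g \<Longrightarrow> fmul (unit_el (gen_tgt g)) (gen_el g :: 'k::field falg) = gen_el g"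
  by (cases g) (simp_all add: unit_el_def gen_el_def fmul_single T_def pcomp_simp)
lemma unit_gen_right: "gen_valid g \<Longrightarrow> fmul (gen_el g :: 'k::field falg) (unit_el (gen_src g)) = gen_el g"
  by (cases g) (simp_all add: unit_el_def gen_el_def fmul_single T_def pcomp_simp)
lemma unit_unit: "fmul (unit_el m) (unit_el m :: 'k::field falg) = unit_el m"
  by (simp add: unit_el_def fmul_single T_def pcomp_simp)

lemma ul_chi: "1 \<le> m \<Longrightarrow> i + 1 \<le> m \<Longrightarrow> \<one> m \<cdot> (\<chi> m i :: 'k::field falg) = \<chi> m i"
  using unit_gen_left[of "X m i"] by simp
lemma ul_dd: "j \<le> n \<Longrightarrow> \<one> (Suc n) \<cdot> (\<partial> n j :: 'k::field falg) = \<partial> n j"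
  using unit_gen_left[of "D n j"] by simp
lemma ur_chi: "1 \<le> m \<Longrightarrow> i + 1 \<le> m \<Longrightarrow> (\<chi> m i :: 'k::field falg) \<cdot> \<one> m = \<chi> m i"
  using unit_gen_right[of "X m i"] by simp
lemma ur_dd: "j \<le> n \<Longrightarrow> (\<partial> n j :: 'k::field falg) \<cdot> \<one> n = \<partial> n j"
  using unit_gen_right[of "D n j"] by simp
lemma ul_chi': "1 \<le> m \<Longrightarrow> i + 1 \<le> m \<Longrightarrow> \<one> m \<cdot> ((\<chi> m i :: 'k::field falg) \<cdot> w) = \<chi> m i \<cdot> w"
  by (simp add: fmul_assoc[symmetric] ul_chi)
lemma ul_dd': "j \<le> n \<Longrightarrow> \<one> (Suc n) \<cdot> ((\<partial> n j :: 'k::field falg) \<cdot> w) = \<partial> n j \<cdot> w"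
  by (simp add: fmul_assoc[symmetric] ul_dd)

lemmas usimps = ul_chi ul_dd ur_chi ur_dd ul_chi' ul_dd' unit_unit fmul_diff_left fmul_diff_right fmul_assoc

lemma I_uminus: "x \<in> ideal_of R \<Longrightarrow> - x \<in> ideal_of R"
proof (induction rule: ideal_of.induct)
  case zero then show ?case by (simp add: ideal_of.zero)
next
  case (add x y) then show ?case using ideal_of.add[of "-x" R "-y"] by (simp add: add.commute)
next
  case (gen r a b) then show ?case using ideal_of.gen[of r R "-a" b] by (simp add: fmul_uminus_left)
qed

lemma I_ml: "x \<in> ideal_of R \<Longrightarrow> c \<cdot> x \<in> ideal_of R"
proof (induction rule: ideal_of.induct)
  case zero then show ?case by (simp add: ideal_of.zero)
next
  case (add x y) then show ?case by (simp add: fmul_add_right ideal_of.add)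
next
  case (gen r a b) then show ?case using ideal_of.gen[of r R "c \<cdot> a" b] by (simp add: fmul_assoc)
qed

lemma I_mr: "x \<in> ideal_of R \<Longrightarrow> x \<cdot> c \<in> ideal_of R"
proof (induction rule: ideal_of.induct)
  case zero then show ?case by (simp add: ideal_of.zero)
next
  case (add x y) then show ?case by (simp add: fmul_add_left ideal_of.add)
next
  case (gen r a b) then show ?case using ideal_of.gen[of r R a "b \<cdot> c"] by (simp add: fmul_assoc)
qed

lemma L_eq: "x = y \<Longrightarrow> x \<equiv>\<^sub>L y" by (simp add: leib_eq_def ideal_of.zero)
lemma L_refl: "x \<equiv>\<^sub>L x" by (simp add: L_eq)
lemma L_sym: "x \<equiv>\<^sub>L y \<Longrightarrow> y \<equiv>\<^sub>L x"
  unfolding leib_eq_def using I_uminus by fastforce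
lemma L_trans[trans]: "x \<equiv>\<^sub>L y \<Longrightarrow> y \<equiv>\<^sub>L z \<Longrightarrow> x \<equiv>\<^sub>L z"
  unfolding leib_eq_def using ideal_of.add by fastforce
lemma L_add: "a \<equiv>\<^sub>L b \<Longrightarrow> c \<equiv>\<^sub>L d \<Longrightarrow> a + c \<equiv>\<^sub>L b + d"
  unfolding leib_eq_def using ideal_of.add by (fastforce simp: algebra_simps)
lemma L_ml: "a \<equiv>\<^sub>L b \<Longrightarrow> c \<cdot> a \<equiv>\<^sub>L c \<cdot> b"
  unfolding leib_eq_def using I_ml by (fastforce simp: fmul_diff_right)
lemma L_mr: "a \<equiv>\<^sub>L b \<Longrightarrow> a \<cdot> c \<equiv>\<^sub>L b \<cdot> c"
  unfolding leib_eq_def using I_mr by (fastforce simp: fmul_diff_left)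

lemma L_rel: "r \<in> leib_rels \<Longrightarrow> \<one> m \<cdot> r \<cdot> \<one> s = r \<Longrightarrow> r = x - y \<Longrightarrow> x \<equiv>\<^sub>L y"
  unfolding leib_eq_def using ideal_of.gen[of r leib_rels "\<one> m" "\<one> s"] by simp



lemma R1: "1 \<le> n \<Longrightarrow> i < j \<Longrightarrow> j + 1 \<le> n \<Longrightarrow>
  (\<partial> n i :: 'k::field falg) \<cdot> \<chi> n j \<equiv>\<^sub>L \<chi> (Suc n) (Suc j) \<cdot> \<partial> n i"
  apply (rule L_rel[where m="Suc n" and s=n and r="\<partial> n i \<cdot> \<chi> n j - \<chi> (Suc n) (Suc j) \<cdot> \<partial> n i"])
    apply (unfold leib_rels_def, rule UnI1, rule UnI1, rule UnI1, rule UnI1, rule UnI2, rule CollectI, (rule exI)+, rule conjI, rule refl, simp)[1]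
   apply (simp add: usimps)
  by simp

lemma R2: "i + 1 \<le> n \<Longrightarrow>
  (\<partial> n i :: 'k::field falg) \<cdot> \<chi> n i \<equiv>\<^sub>L \<chi> (Suc n) (Suc i) \<cdot> (\<chi> (Suc n) i \<cdot> \<partial> n (Suc i))"
  apply (rule L_rel[where m="Suc n" and s=n and r="\<partial> n i \<cdot> \<chi> n i - \<chi> (Suc n) (Suc i) \<cdot> \<chi> (Suc n) i \<cdot> \<partial> n (Suc i)"])
    apply (unfold leib_rels_def, rule UnI1, rule UnI1, rule UnI1, rule UnI2, rule CollectI, (rule exI)+, rule conjI, rule refl, simp)[1]
   apply (simp add: usimps)
  by (simp add: fmul_assoc)

lemma R3: "j + 1 \<le> n \<Longrightarrow>
  (\<partial> n (Suc j) :: 'k::field falg) \<cdot> \<chi> n j \<equiv>\<^sub>L \<chi> (Suc n) j \<cdot> (\<chi> (Suc n) (Suc j) \<cdot> \<partial> n j)"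
  apply (rule L_rel[where m="Suc n" and s=n and r="\<partial> n (Suc j) \<cdot> \<chi> n j - \<chi> (Suc n) j \<cdot> \<chi> (Suc n) (Suc j) \<cdot> \<partial> n j"])
    apply (unfold leib_rels_def, rule UnI1, rule UnI1, rule UnI2, rule CollectI, (rule exI)+, rule conjI, rule refl, simp)[1]
   apply (simp add: usimps)
  by (simp add: fmul_assoc)

lemma R4: "j + 1 < i \<Longrightarrow> i \<le> n \<Longrightarrow>
  (\<partial> n i :: 'k::field falg) \<cdot> \<chi> n j \<equiv>\<^sub>L \<chi> (Suc n) j \<cdot> \<partial> n i"
  apply (rule L_rel[where m="Suc n" and s=n and r="\<partial> n i \<cdot> \<chi> n j - \<chi> (Suc n) j \<cdot> \<partial> n i"])
    apply (unfold leib_rels_def, rule UnI1, rule UnI2, rule CollectI, (rule exI)+, rule conjI, rule refl, simp)[1]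
   apply (simp add: usimps)
  by simp

lemma S1: "1 \<le> m \<Longrightarrow> j + 1 \<le> m \<Longrightarrow> i + 2 \<le> j \<Longrightarrow>
  (\<chi> m i :: 'k::field falg) \<cdot> \<chi> m j \<equiv>\<^sub>L \<chi> m j \<cdot> \<chi> m i"
  apply (rule L_rel[where m=m and s=m and r="\<chi> m i \<cdot> \<chi> m j - \<chi> m j \<cdot> \<chi> m i"])
    apply (unfold leib_rels_def, rule UnI1, rule UnI1, rule UnI1, rule UnI1, rule UnI1, rule UnI1, rule UnI1, rule UnI2, rule CollectI, (rule exI)+, rule conjI, rule refl, simp)[1]
   apply (simp add: usimps)
  by simp

lemma S2: "i + 2 \<le> m \<Longrightarrow>
  (\<chi> m i :: 'k::field falg) \<cdot> (\<chi> m (Suc i) \<cdot> \<chi> m i) \<equiv>\<^sub>L \<chi> m (Suc i) \<cdot> (\<chi> m i \<cdot> \<chi> m (Suc i))"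
  apply (rule L_rel[where m=m and s=m and r="\<chi> m i \<cdot> \<chi> m (Suc i) \<cdot> \<chi> m i - \<chi> m (Suc i) \<cdot> \<chi> m i \<cdot> \<chi> m (Suc i)"])
    apply (unfold leib_rels_def, rule UnI1, rule UnI1, rule UnI1, rule UnI1, rule UnI1, rule UnI1, rule UnI2, rule CollectI, (rule exI)+, rule conjI, rule refl, simp)[1]
   apply (simp add: usimps)
  by (simp add: fmul_assoc)

lemma S3: "1 \<le> m \<Longrightarrow> i + 1 \<le> m \<Longrightarrow>
  (\<chi> m i :: 'k::field falg) \<cdot> \<chi> m i \<equiv>\<^sub>L \<one> m"
  apply (rule L_rel[where m=m and s=m and r="\<chi> m i \<cdot> \<chi> m i - \<one> m"])
    apply (unfold leib_rels_def, rule UnI1, rule UnI1, rule UnI1, rule UnI1, rule UnI1, rule UnI2, rule CollectI, (rule exI)+, rule conjI, rule refl, simp)[1]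
   apply (simp add: usimps)
  by simp



lemma S1w: "1 \<le> m \<Longrightarrow> j + 1 \<le> m \<Longrightarrow> i + 2 \<le> j \<Longrightarrow>
  (\<chi> m i :: 'k::field falg) \<cdot> (\<chi> m j \<cdot> w) \<equiv>\<^sub>L \<chi> m j \<cdot> (\<chi> m i \<cdot> w)"
  using L_mr[OF S1, of m j i w] by (simp add: fmul_assoc)

lemma S2w: "i + 2 \<le> m \<Longrightarrow>
  (\<chi> m i :: 'k::field falg) \<cdot> (\<chi> m (Suc i) \<cdot> (\<chi> m i \<cdot> w)) \<equiv>\<^sub>L \<chi> m (Suc i) \<cdot> (\<chi> m i \<cdot> (\<chi> m (Suc i) \<cdot> w))"
  using L_mr[OF S2, of i m w] by (simp add: fmul_assoc)

lemma S3w: "1 \<le> m \<Longrightarrow> i + 1 \<le> m \<Longrightarrow>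
  (\<chi> m i :: 'k::field falg) \<cdot> (\<chi> m i \<cdot> w) \<equiv>\<^sub>L \<one> m \<cdot> w"
  using L_mr[OF S3, of m i w] by (simp add: fmul_assoc)

lemma rho_Suc': "(rho n (Suc i) :: 'k::field falg) \<cdot> c = \<partial> n (Suc i) \<cdot> c + \<chi> (Suc n) (Suc i) \<cdot> (rho n i \<cdot> c)"
  by (simp add: fmul_add_left fmul_assoc)

lemma rho_rp: "(rho n j :: 'k::field falg) = \<partial> n j + \<chi> (Suc n) j \<cdot> rho_pred n j"
  by (cases j) (simp_all add: rho_pred_def)

lemma caseA: "1 \<le> n \<Longrightarrow> j + 1 \<le> n \<Longrightarrow> i < j \<Longrightarrow>
  (rho n i :: 'k::field falg) \<cdot> \<chi> n j \<equiv>\<^sub>L \<chi> (Suc n) (Suc j) \<cdot> rho n i"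
proof (induction i)
  case 0
  then show ?case using R1[of n 0 j] by simp
next
  case (Suc i)
  have "(rho n (Suc i) :: 'k falg) \<cdot> \<chi> n j = \<partial> n (Suc i) \<cdot> \<chi> n j + \<chi> (Suc n) (Suc i) \<cdot> (rho n i \<cdot> \<chi> n j)"
    by (rule rho_Suc')
  also have "\<dots> \<equiv>\<^sub>L \<chi> (Suc n) (Suc j) \<cdot> \<partial> n (Suc i) + \<chi> (Suc n) (Suc i) \<cdot> (\<chi> (Suc n) (Suc j) \<cdot> rho n i)"
    using Suc by (intro L_add R1 L_ml) auto
  also have "\<dots> \<equiv>\<^sub>L \<chi> (Suc n) (Suc j) \<cdot> \<partial> n (Suc i) + \<chi> (Suc n) (Suc j) \<cdot> (\<chi> (Suc n) (Suc i) \<cdot> rho n i)"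
    using Suc by (intro L_add L_refl S1w) auto
  also have "\<dots> = \<chi> (Suc n) (Suc j) \<cdot> rho n (Suc i)"
    by (simp add: fmul_add_right)
  finally show ?case .
qed

lemma caseB: assumes a: "i + 1 \<le> n" shows
  "(rho n i :: 'k::field falg) \<cdot> \<chi> n i \<equiv>\<^sub>L \<chi> (Suc n) (Suc i) \<cdot> (\<chi> (Suc n) i \<cdot> \<partial> n (Suc i))
     + \<chi> (Suc n) i \<cdot> (\<chi> (Suc n) (Suc i) \<cdot> rho_pred n i)"
proof (cases i)
  case 0
  then show ?thesis using R2[of 0 n] a by (simp add: rho_pred_def)
next
  case (Suc k)
  have "(rho n i :: 'k falg) \<cdot> \<chi> n i = \<partial> n (Suc k) \<cdot> \<chi> n (Suc k) + \<chi> (Suc n) (Suc k) \<cdot> (rho n k \<cdot> \<chi> n (Suc k))"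
    unfolding Suc by (rule rho_Suc')
  also have "\<dots> \<equiv>\<^sub>L \<chi> (Suc n) (Suc i) \<cdot> (\<chi> (Suc n) i \<cdot> \<partial> n (Suc i))
     + \<chi> (Suc n) i \<cdot> (\<chi> (Suc n) (Suc i) \<cdot> rho_pred n i)"
  proof -
    have hA: "(rho n k :: 'k falg) \<cdot> \<chi> n (Suc k) \<equiv>\<^sub>L \<chi> (Suc n) (Suc (Suc k)) \<cdot> rho n k"
      by (rule caseA) (use a Suc in auto)
    have r2: "(\<partial> n (Suc k) :: 'k falg) \<cdot> \<chi> n (Suc k) \<equiv>\<^sub>L \<chi> (Suc n) (Suc (Suc k)) \<cdot> (\<chi> (Suc n) (Suc k) \<cdot> \<partial> n (Suc (Suc k)))"
      by (rule R2) (use a Suc in auto)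
    show ?thesis unfolding Suc rho_pred_def by (simp add: L_add[OF r2 L_ml[OF hA]])
  qed
  finally show ?thesis .
qed

lemma caseC: "1 \<le> n \<Longrightarrow> i \<le> n \<Longrightarrow> j < i \<Longrightarrow>
  (rho n i :: 'k::field falg) \<cdot> \<chi> n j \<equiv>\<^sub>L \<chi> (Suc n) j \<cdot> rho n i"
proof (induction i)
  case 0
  then show ?case by simp
next
  case (Suc i)
  show ?case
  proof (cases "j < i")
    case True
    have "(rho n (Suc i) :: 'k falg) \<cdot> \<chi> n j = \<partial> n (Suc i) \<cdot> \<chi> n j + \<chi> (Suc n) (Suc i) \<cdot> (rho n i \<cdot> \<chi> n j)"
      by (rule rho_Suc')
    also have "\<dots> \<equiv>\<^sub>L \<chi> (Suc n) j \<cdot> \<partial> n (Suc i) + \<chi> (Suc n) (Suc i) \<cdot> (\<chi> (Suc n) j \<cdot> rho n i)"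
      using Suc True by (intro L_add R4 L_ml) auto
    also have "\<dots> \<equiv>\<^sub>L \<chi> (Suc n) j \<cdot> \<partial> n (Suc i) + \<chi> (Suc n) j \<cdot> (\<chi> (Suc n) (Suc i) \<cdot> rho n i)"
      using Suc True by (intro L_add L_refl L_sym[OF S1w]) auto
    also have "\<dots> = \<chi> (Suc n) j \<cdot> rho n (Suc i)"
      by (simp add: fmul_add_right)
    finally show ?thesis .
  next
    case False
    then have ji: "j = i" using Suc by simp
    have jn: "j + 1 \<le> n" using Suc ji by simp
    have "(rho n (Suc i) :: 'k falg) \<cdot> \<chi> n j = \<partial> n (Suc j) \<cdot> \<chi> n j + \<chi> (Suc n) (Suc j) \<cdot> (rho n j \<cdot> \<chi> n j)"
      unfolding ji by (rule rho_Suc')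
    also have "\<dots> \<equiv>\<^sub>L \<chi> (Suc n) j \<cdot> (\<chi> (Suc n) (Suc j) \<cdot> \<partial> n j)
       + \<chi> (Suc n) (Suc j) \<cdot> (\<chi> (Suc n) (Suc j) \<cdot> (\<chi> (Suc n) j \<cdot> \<partial> n (Suc j))
       + \<chi> (Suc n) j \<cdot> (\<chi> (Suc n) (Suc j) \<cdot> rho_pred n j))"
      using jn by (intro L_add R3 L_ml caseB)
    also have "\<dots> = \<chi> (Suc n) j \<cdot> (\<chi> (Suc n) (Suc j) \<cdot> \<partial> n j)
       + \<chi> (Suc n) (Suc j) \<cdot> (\<chi> (Suc n) (Suc j) \<cdot> (\<chi> (Suc n) j \<cdot> \<partial> n (Suc j)))
       + \<chi> (Suc n) (Suc j) \<cdot> (\<chi> (Suc n) j \<cdot> (\<chi> (Suc n) (Suc j) \<cdot> rho_pred n j))"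
      by (simp add: fmul_add_right add.assoc)
    also have "\<dots> \<equiv>\<^sub>L \<chi> (Suc n) j \<cdot> (\<chi> (Suc n) (Suc j) \<cdot> \<partial> n j)
       + \<one> (Suc n) \<cdot> (\<chi> (Suc n) j \<cdot> \<partial> n (Suc j))
       + \<chi> (Suc n) j \<cdot> (\<chi> (Suc n) (Suc j) \<cdot> (\<chi> (Suc n) j \<cdot> rho_pred n j))"
      using jn by (intro L_add L_refl S3w L_sym[OF S2w]) auto
    also have "\<dots> = \<chi> (Suc n) j \<cdot> rho n (Suc j)"
      using jn by (simp add: ul_chi' rho_rp[of n j] fmul_add_right algebra_simps)
    finally show ?thesis unfolding ji .
  qed
qed

theorem lemma3p8:
  fixes n i j :: nat
  assumes "1 \<le> n" and "i \<le> n" and "j + 1 \<le> n"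
  shows "(rho n i :: 'k::field falg) \<cdot> \<chi> n j \<equiv>\<^sub>L
     (if i < j then \<chi> (Suc n) (Suc j) \<cdot> rho n i
      else if j = i then
        \<chi> (Suc n) (Suc i) \<cdot> \<chi> (Suc n) i \<cdot> rho n (Suc i)
        - \<chi> (Suc n) (Suc i) \<cdot> \<chi> (Suc n) i \<cdot> \<chi> (Suc n) (Suc i) \<cdot> rho n i
        + \<chi> (Suc n) i \<cdot> \<chi> (Suc n) (Suc i) \<cdot> rho_pred n i
      else \<chi> (Suc n) j \<cdot> rho n i)"
proof -
  consider "i < j" | "j = i" | "j < i" by linarith
  then show ?thesis
  proof cases
    case 1 then show ?thesis using caseA assms by simp
  next
    case 2
    have e: "\<chi> (Suc n) (Suc i) \<cdot> \<chi> (Suc n) i \<cdot> rho n (Suc i)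
        - \<chi> (Suc n) (Suc i) \<cdot> \<chi> (Suc n) i \<cdot> \<chi> (Suc n) (Suc i) \<cdot> rho n i
        + \<chi> (Suc n) i \<cdot> \<chi> (Suc n) (Suc i) \<cdot> rho_pred n i
       = (\<chi> (Suc n) (Suc i) \<cdot> (\<chi> (Suc n) i \<cdot> \<partial> n (Suc i))
     + \<chi> (Suc n) i \<cdot> (\<chi> (Suc n) (Suc i) \<cdot> rho_pred n i) :: 'k falg)"
      by (simp add: fmul_add_right fmul_assoc)
    have ni: "\<not> i < j" using 2 by simp
    show ?thesis unfolding if_not_P[OF ni] if_P[OF 2] e using caseB[of i n] assms 2 by simp
  next
    case 3 then show ?thesis using caseC assms by simp
  qed
qed


end
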